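(* Let $P$, $h$ (fixed), $\ell$, $C$, $S$ ($n$ i.i.d. samples from $P$), the partition $\mathcal{Z}_1,\dots,\mathcal{Z}_K$, and constants $\gamma\ge1$, $\delta>0$, $\alpha\in[0,\frac{\gamma n(K+\gamma n)}{K(4n-3)}]$ be as in the context. Let $\hat S=\mathcal{T}(S)$ be the result of applying a transformation method $\mathcal{T}$, independent of $h$, to the samples of $S$. For $i\in T$ let $\hat S_i=\hat S\cap\mathcal{Z}_i$, $m_i=|\hat S_i|$, $m=\sum_{i\in T}m_i$, $\bar\epsilon_i=\frac{1}{m_in_i}\sum_{z\in S_i,\,s\in\hat S_i}|\ell(h,z)-\ell(h,s)|$, and $\bar\epsilon(h)=\sum_{i\in T}\frac{m_i}{m}\bar\epsilon_i$. If $\frac{n_i}{n}=\frac{m_i}{m}$ for every $i\in T$, then with probability at least $1-\gamma^{-\alpha}-\delta$, $$F(P,h)\le\bar\epsilon(h)+F(\hat S,h)+C\sqrt{\hat u\,\alpha\ln\gamma}+g(\delta/2).$$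
   Context: $F(P,h)=\mathbb{E}_{z\sim P}[\ell(h,z)]$, and for a finite dataset $A$, $F(A,h)=\frac1{|A|}\sum_{z\in A}\ell(h,z)$. $\ell\ge0$, $C=\sup_z\ell(h,z)<\infty$. $S_i=S\cap\mathcal{Z}_i$, $n_i=|S_i|$, $T=\{i\in[K]:S\cap\mathcal{Z}_i\ne\emptyset\}$. $\hat u=\frac{\gamma}{2n}+\frac{\gamma^2}{2}\sum_{i=1}^K(n_i/n)^2+\gamma^2\sqrt{\frac2n\ln\frac{2K}{\delta}}$ and $g(\delta)=C(\sqrt2+1)\sqrt{\frac{|T|\ln(2K/\delta)}{n}}+\frac{2C|T|\ln(2K/\delta)}{n}$. *)

theory Defs
  imports "HOL-Probability.Probability" "HOL-Library.Multiset"
begin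

text \<open>Empirical risk F(A,h) of a finite dataset (multiset) A, for the fixed
hypothesis h, whose loss is given as a function l z = loss(h,z).\<close>
definition emp_risk :: "('z \<Rightarrow> real) \<Rightarrow> 'z multiset \<Rightarrow> real" where
  "emp_risk l A = sum_mset (image_mset l A) / real (size A)"

definition sample_set :: "nat \<Rightarrow> (nat \<Rightarrow> 'z) \<Rightarrow> 'z multiset" where
  "sample_set n s = image_mset s (mset [0..<n])"

definition cell :: "'z set \<Rightarrow> 'z multiset \<Rightarrow> 'z multiset" where
  "cell Zi A = filter_mset (\<lambda>z. z \<in> Zi) A"

definition hit_cells :: "nat \<Rightarrow> (nat \<Rightarrow> 'z set) \<Rightarrow> 'z multiset \<Rightarrow> nat set" where
  "hit_cells K Z A = {i \<in> {..<K}. cell (Z i) A \<noteq> {#}}"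

definition eps_cell :: "('z \<Rightarrow> real) \<Rightarrow> 'z multiset \<Rightarrow> 'z multiset \<Rightarrow> real" where
  "eps_cell l SSi SSh =
     sum_mset (image_mset (\<lambda>z. sum_mset (image_mset (\<lambda>s. \<bar>l z - l s\<bar>) SSh)) SSi)
       / (real (size SSh) * real (size SSi))"

definition eps_bar :: "nat \<Rightarrow> (nat \<Rightarrow> 'z set) \<Rightarrow> ('z \<Rightarrow> real) \<Rightarrow> 'z multiset \<Rightarrow> 'z multiset \<Rightarrow> real" where
  "eps_bar K Z l S Sh =
     (let T = hit_cells K Z S;
          m = (\<Sum>i\<in>T. real (size (cell (Z i) Sh)))
      in \<Sum>i\<in>T. real (size (cell (Z i) Sh)) / m * eps_cell l (cell (Z i) S) (cell (Z i) Sh))"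

definition u_hat :: "nat \<Rightarrow> (nat \<Rightarrow> 'z set) \<Rightarrow> real \<Rightarrow> real \<Rightarrow> nat \<Rightarrow> 'z multiset \<Rightarrow> real" where
  "u_hat K Z \<gamma> \<delta> n S =
     \<gamma> / (2 * real n)
     + \<gamma>\<^sup>2 / 2 * (\<Sum>i\<in>{..<K}. (real (size (cell (Z i) S)) / real n)\<^sup>2)
     + \<gamma>\<^sup>2 * sqrt (2 / real n * ln (2 * real K / \<delta>))"

definition g_fun :: "real \<Rightarrow> nat \<Rightarrow> nat \<Rightarrow> nat \<Rightarrow> real \<Rightarrow> real" where
  "g_fun C K n cardT \<delta> =
     C * (sqrt 2 + 1) * sqrt (real cardT * ln (2 * real K / \<delta>) / real n)
     + 2 * C * real cardT * ln (2 * real K / \<delta>) / real n"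

end

theory Submission
  imports Defs
begin


lemma PiM_indep_coords:
  fixes P :: "'z measure" and n :: nat
  assumes P: "prob_space P" and n: "n \<ge> 1"
  shows "prob_space.indep_vars (PiM {..<n} (\<lambda>_. P)) (\<lambda>_. P) (\<lambda>i x. x i) {..<n}"
proof -
  interpret M: prob_space "PiM {..<n} (\<lambda>_. P)"
    by (intro prob_space_PiM P)
  have "(0::nat) \<in> {..<n}" using n by simp
  then have ne: "{..<n} \<noteq> {}" by blast
  show ?thesis
  proof (subst M.indep_vars_iff_distr_eq_PiM'[OF ne])
    show "(\<lambda>x. x i) \<in> measurable (PiM {..<n} (\<lambda>_. P)) P" if "i \<in> {..<n}" for i
      using that measurable_component_singleton[of i "{..<n}" "\<lambda>_. P"] by simp
    have 1: "distr (PiM {..<n} (\<lambda>_. P)) (PiM {..<n} (\<lambda>_. P)) (\<lambda>x. restrict x {..<n}) = PiM {..<n} (\<lambda>_. P)"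
      by (subst distr_cong[OF refl refl, where g="\<lambda>x. x"]) (auto simp: space_PiM)
    have 2: "(PiM {..<n} (\<lambda>i. distr (PiM {..<n} (\<lambda>_. P)) P (\<lambda>x. x i))) = PiM {..<n} (\<lambda>_. P)"
      by (intro PiM_cong refl distr_PiM_component) (auto simp: P)
    show "distr (PiM {..<n} (\<lambda>_. P)) (PiM {..<n} (\<lambda>_. P)) (\<lambda>x. restrict x {..<n}) =
      PiM {..<n} (\<lambda>i. distr (PiM {..<n} (\<lambda>_. P)) P (\<lambda>x. x i))"
      using 1 2 by simp
  qed
qed

lemma hoeffding_part:
  fixes P :: "'z measure" and n :: nat and l :: "'z \<Rightarrow> real"
  assumes P: "prob_space P" and n: "n \<ge> 1"
    and l_meas: "l \<in> borel_measurable P"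
    and lb: "\<And>z. z \<in> space P \<Longrightarrow> 0 \<le> l z \<and> l z \<le> C"
    and C: "C > 0" and eps: "\<epsilon> \<ge> 0"
  shows "measure (PiM {..<n} (\<lambda>_. P))
     {x\<in>space (PiM {..<n} (\<lambda>_. P)). (\<Sum>i\<in>{..<n}. l (x i)) / real n \<le> (\<integral>z. l z \<partial>P) - \<epsilon>}
     \<le> exp (-2 * real n * \<epsilon>\<^sup>2 / C\<^sup>2)"
proof -
  let ?M = "PiM {..<n} (\<lambda>_. P)"
  interpret M: prob_space ?M
    by (intro prob_space_PiM P)
  have "(0::nat) \<in> {..<n}" using n by simp
  then have ne: "{..<n} \<noteq> {}" by blast
  have comp: "(\<lambda>x. x i) \<in> measurable ?M P" if "i \<in> {..<n}" for i
    using that measurable_component_singleton[of i "{..<n}" "\<lambda>_. P"] by simp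
  have dist: "distr ?M borel (\<lambda>x. l (x i)) = distr P borel l" if "i \<in> {..<n}" for i
  proof -
    have "distr ?M borel (\<lambda>x. l (x i)) = distr (distr ?M P (\<lambda>x. x i)) borel l"
      using comp[OF that] l_meas by (subst distr_distr) (auto simp: comp_def)
    also have "distr ?M P (\<lambda>x. x i) = P"
      using that by (intro distr_PiM_component) (auto simp: P)
    finally show ?thesis .
  qed
  interpret H: Hoeffding_ineq_iid ?M "{..<n}" "\<lambda>i x. l (x i)" "\<lambda>x. l (x 0)" 0 C
       "M.expectation (\<lambda>x. l (x 0))"
  proof unfold_locales
    show "finite {..<n}" by simp
    show "M.indep_vars (\<lambda>_. borel) (\<lambda>i x. l (x i)) {..<n}"
      by (rule M.indep_vars_compose2[OF PiM_indep_coords[OF P n]]) (use l_meas in auto)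
    show "distr ?M borel (\<lambda>x. l (x i)) = distr ?M borel (\<lambda>x. l (x 0))" if "i \<in> {..<n}" for i
      using dist[OF that] dist[OF \<open>0 \<in> {..<n}\<close>] by simp
    show "(\<lambda>x. l (x 0)) \<in> borel_measurable ?M"
      using comp[OF \<open>0 \<in> {..<n}\<close>] l_meas by measurable
    show "AE x in ?M. l (x 0) \<in> {0..C}"
    proof (rule AE_I2)
      fix x assume "x \<in> space ?M"
      then have "x 0 \<in> space P" using \<open>0 \<in> {..<n}\<close> by (auto simp: space_PiM)
      then show "l (x 0) \<in> {0..C}" using lb by auto
    qed
  qed simp
  have mu: "M.expectation (\<lambda>x. l (x 0)) = (\<integral>z. l z \<partial>P)"
  proof -
    have "M.expectation (\<lambda>x. l (x 0)) = (\<integral>z. l z \<partial>(distr ?M P (\<lambda>x. x 0)))"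
      using comp[OF \<open>0 \<in> {..<n}\<close>] l_meas by (subst integral_distr) auto
    also have "distr ?M P (\<lambda>x. x 0) = P"
      using \<open>0 \<in> {..<n}\<close> by (intro distr_PiM_component) (auto simp: P)
    finally show ?thesis .
  qed
  show ?thesis
    using H.Hoeffding_ineq_le'[OF eps C ne] by (simp add: mu)
qed



lemma sum_mset_cells:
  fixes f :: "'z \<Rightarrow> real"
  assumes fin: "finite T" and disj: "\<And>i j. i \<in> T \<Longrightarrow> j \<in> T \<Longrightarrow> i \<noteq> j \<Longrightarrow> Z i \<inter> Z j = {}"
    and sub: "set_mset A \<subseteq> (\<Union>i\<in>T. Z i)"
  shows "sum_mset (image_mset f A) = (\<Sum>i\<in>T. sum_mset (image_mset f (cell (Z i) A)))"
  using sub
proof (induction A)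
  case empty
  then show ?case by (simp add: cell_def)
next
  case (add x A)
  then obtain k where k: "k \<in> T" "x \<in> Z k" by auto
  have one: "(\<Sum>i\<in>T. (if x \<in> Z i then f x else 0)) = f x"
  proof -
    have "(\<Sum>i\<in>T. (if x \<in> Z i then f x else 0)) = (\<Sum>i\<in>{k}. (if x \<in> Z i then f x else 0))"
      using k disj by (intro sum.mono_neutral_right fin) auto
    then show ?thesis using k by simp
  qed
  have "sum_mset (image_mset f (add_mset x A)) = f x + sum_mset (image_mset f A)" by simp
  also have "\<dots> = (\<Sum>i\<in>T. (if x \<in> Z i then f x else 0)) + (\<Sum>i\<in>T. sum_mset (image_mset f (cell (Z i) A)))"
    using add by (simp add: one)
  also have "\<dots> = (\<Sum>i\<in>T. sum_mset (image_mset f (cell (Z i) (add_mset x A))))"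
    unfolding sum.distrib[symmetric] by (intro sum.cong refl) (simp add: cell_def)
  finally show ?case .
qed

lemma sum_mset_ones: "sum_mset (image_mset (\<lambda>_. 1::real) X) = real (size X)"
  by (induction X) auto

lemma frac_diff: "(x::real) > 0 \<Longrightarrow> y > 0 \<Longrightarrow> a / x - b / y = (y * a - x * b) / (y * x)"
  by (simp add: field_simps)

lemma size_cells:
  assumes fin: "finite T" and disj: "\<And>i j. i \<in> T \<Longrightarrow> j \<in> T \<Longrightarrow> i \<noteq> j \<Longrightarrow> Z i \<inter> Z j = {}"
    and sub: "set_mset A \<subseteq> (\<Union>i\<in>T. Z i)"
  shows "real (size A) = (\<Sum>i\<in>T. real (size (cell (Z i) A)))"
proof -
  have "sum_mset (image_mset (\<lambda>_. 1::real) A) = (\<Sum>i\<in>T. sum_mset (image_mset (\<lambda>_. 1::real) (cell (Z i) A)))"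
    by (rule sum_mset_cells[OF fin disj sub])
  then show ?thesis by (simp only: sum_mset_ones)
qed

lemma sum_mset_const_minus:
  fixes g :: "'z \<Rightarrow> real"
  shows "sum_mset (image_mset (\<lambda>s. c - g s) B) = real (size B) * c - sum_mset (image_mset g B)"
  by (induction B) (auto simp: algebra_simps)

lemma sum_mset_mult_minus:
  fixes g :: "'z \<Rightarrow> real"
  shows "sum_mset (image_mset (\<lambda>z. b * g z - c) A) = b * sum_mset (image_mset g A) - real (size A) * c"
  by (induction A) (auto simp: algebra_simps)

lemma sum_mset_mono_real:
  fixes f g :: "'z \<Rightarrow> real"
  assumes "\<And>x. f x \<le> g x"
  shows "sum_mset (image_mset f A) \<le> sum_mset (image_mset g A)"
  using assms by (induction A) (auto intro: add_mono)

lemma cell_bound: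
  fixes l :: "'z \<Rightarrow> real"
  assumes "size A > 0" "size B > 0"
  shows "sum_mset (image_mset l A) / real (size A) - sum_mset (image_mset l B) / real (size B)
     \<le> eps_cell l A B"
proof -
  let ?a = "sum_mset (image_mset l A)" and ?b = "sum_mset (image_mset l B)"
  have "real (size B) * ?a - real (size A) * ?b
      = sum_mset (image_mset (\<lambda>z. sum_mset (image_mset (\<lambda>s. l z - l s) B)) A)"
  proof -
    have "(\<lambda>z. sum_mset (image_mset (\<lambda>s. l z - l s) B)) = (\<lambda>z. real (size B) * l z - ?b)"
      by (simp add: sum_mset_const_minus)
    then show ?thesis by (simp only: sum_mset_mult_minus)
  qed
  also have "\<dots> \<le> sum_mset (image_mset (\<lambda>z. sum_mset (image_mset (\<lambda>s. \<bar>l z - l s\<bar>) B)) A)"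
    by (intro sum_mset_mono_real) auto
  finally have le: "real (size B) * ?a - real (size A) * ?b \<le> sum_mset (image_mset (\<lambda>z. sum_mset (image_mset (\<lambda>s. \<bar>l z - l s\<bar>) B)) A)" .
  have pos: "real (size B) * real (size A) > 0" using assms by simp
  have pA: "real (size A) > 0" and pB: "real (size B) > 0" using assms by auto
  have "?a / real (size A) - ?b / real (size B) = (real (size B) * ?a - real (size A) * ?b) / (real (size B) * real (size A))"
    using pA pB by (rule frac_diff)
  also have "\<dots> \<le> eps_cell l A B"
    unfolding eps_cell_def using le pos by (intro divide_right_mono) auto
  finally show ?thesis .
qed

lemma det_bound:
  fixes l :: "'z \<Rightarrow> real" and S Sh :: "'z multiset" and Z :: "nat \<Rightarrow> 'z set"
  assumes Kdisj: "\<And>i j. i < K \<Longrightarrow> j < K \<Longrightarrow> i \<noteq> j \<Longrightarrow> Z i \<inter> Z j = {}"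
    and Scov: "set_mset S \<subseteq> (\<Union>i<K. Z i)"
    and Shcov: "set_mset Sh \<subseteq> (\<Union>i\<in>hit_cells K Z S. Z i)"
    and prp: "\<And>i. i \<in> hit_cells K Z S \<Longrightarrow> real (size (cell (Z i) S)) / real (size S)
        = real (size (cell (Z i) Sh)) / (\<Sum>j\<in>hit_cells K Z S. real (size (cell (Z j) Sh)))"
  shows "emp_risk l S \<le> eps_bar K Z l S Sh + emp_risk l Sh"
proof -
  define T where "T = hit_cells K Z S"
  have fin: "finite T" unfolding T_def hit_cells_def by auto
  have disj: "\<And>i j. i \<in> T \<Longrightarrow> j \<in> T \<Longrightarrow> i \<noteq> j \<Longrightarrow> Z i \<inter> Z j = {}"
    using Kdisj unfolding T_def hit_cells_def by auto
  have ScovT: "set_mset S \<subseteq> (\<Union>i\<in>T. Z i)"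
  proof
    fix x assume x: "x \<in># S"
    then obtain i where i: "i < K" "x \<in> Z i" using Scov by auto
    then have "x \<in># cell (Z i) S" using x by (simp add: cell_def)
    then have "i \<in> T" using i unfolding T_def hit_cells_def by auto
    then show "x \<in> (\<Union>i\<in>T. Z i)" using i by auto
  qed
  have ShcovT: "set_mset Sh \<subseteq> (\<Union>i\<in>T. Z i)" using Shcov T_def by simp
  define nS where "nS = real (size S)"
  define m where "m = (\<Sum>j\<in>T. real (size (cell (Z j) Sh)))"
  define ni where "ni = (\<lambda>i. real (size (cell (Z i) S)))"
  define mi where "mi = (\<lambda>i. real (size (cell (Z i) Sh)))"
  define a where "a = (\<lambda>i. sum_mset (image_mset l (cell (Z i) S)))"
  define b where "b = (\<lambda>i. sum_mset (image_mset l (cell (Z i) Sh)))"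
  define e where "e = (\<lambda>i. eps_cell l (cell (Z i) S) (cell (Z i) Sh))"
  have nS_eq: "nS = (\<Sum>i\<in>T. ni i)" unfolding nS_def ni_def by (rule size_cells[OF fin disj ScovT])
  have m_eq: "real (size Sh) = m" unfolding m_def by (rule size_cells[OF fin disj ShcovT])
  have prop': "ni i / nS = mi i / m" if "i \<in> T" for i
    using prp[of i] that unfolding T_def ni_def mi_def nS_def m_def by simp
  have key: "a i / nS \<le> mi i / m * e i + b i / m" if iT: "i \<in> T" for i
  proof -
    have nipos: "ni i > 0" using iT unfolding T_def hit_cells_def ni_def
      by (simp add: nonempty_has_size)
    have nSpos: "nS > 0" unfolding nS_eq using fin iT nipos
      by (intro sum_pos2[where i=i]) (auto simp: ni_def)
    have q: "mi i / m > 0" using prop'[OF iT] nipos nSpos by (metis divide_pos_pos)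
    have mnn: "m \<ge> 0" unfolding m_def by (intro sum_nonneg) auto
    have mipos: "mi i > 0" and mpos: "m > 0"
      using q mnn unfolding mi_def
      by (auto simp: zero_less_divide_iff)
    have c: "a i / ni i - b i / mi i \<le> e i"
      unfolding a_def b_def e_def ni_def mi_def
      by (rule cell_bound) (use nipos mipos in \<open>auto simp: ni_def mi_def\<close>)
    have "a i / nS = mi i / m * (a i / ni i - b i / mi i) + b i / m"
      using prop'[OF iT] nipos nSpos mipos mpos
      by (simp add: field_simps)
    also have "\<dots> \<le> mi i / m * e i + b i / m"
      using mult_left_mono[OF c less_imp_le[OF q]] by simp
    finally show ?thesis .
  qed
  have "emp_risk l S = (\<Sum>i\<in>T. a i) / nS"
  proof -
    have "sum_mset (image_mset l S) = (\<Sum>i\<in>T. a i)"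
      unfolding a_def by (rule sum_mset_cells[OF fin disj ScovT])
    then show ?thesis by (simp add: emp_risk_def nS_def)
  qed
  also have "\<dots> = (\<Sum>i\<in>T. a i / nS)" by (simp add: sum_divide_distrib)
  also have "\<dots> \<le> (\<Sum>i\<in>T. mi i / m * e i + b i / m)" by (intro sum_mono key)
  also have "\<dots> = (\<Sum>i\<in>T. mi i / m * e i) + (\<Sum>i\<in>T. b i) / m"
    by (simp add: sum.distrib sum_divide_distrib)
  also have "(\<Sum>i\<in>T. mi i / m * e i) = eps_bar K Z l S Sh"
    unfolding eps_bar_def T_def m_def mi_def e_def Let_def by simp
  also have "(\<Sum>i\<in>T. b i) / m = emp_risk l Sh"
  proof -
    have "sum_mset (image_mset l Sh) = (\<Sum>i\<in>T. b i)"
      unfolding b_def by (rule sum_mset_cells[OF fin disj ShcovT])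
    then show ?thesis by (simp add: emp_risk_def m_eq)
  qed
  finally show ?thesis .
qed


lemma emp_sample: "sum_mset (image_mset l (sample_set n s)) = (\<Sum>i\<in>{..<n}. (l (s i)::real))"
  unfolding sample_set_def by (simp add: image_mset.compositionality sum_unfold_sum_mset lessThan_atLeast0 comp_def)
lemma size_sample[simp]: "size (sample_set n s) = n" by (simp add: sample_set_def)
lemma set_sample: "set_mset (sample_set n s) = s ` {..<n}" by (auto simp: sample_set_def)

theorem theorem2:
  fixes P :: "'z measure" and l :: "'z \<Rightarrow> real" and C :: real
    and n K :: nat and Z :: "nat \<Rightarrow> 'z set"
    and \<gamma> \<delta> \<alpha> :: real
    and Tr :: "(nat \<Rightarrow> 'z) \<Rightarrow> 'z multiset"
  assumes P: "prob_space P"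
    and l_meas: "l \<in> borel_measurable P"
    and l_nonneg: "\<And>z. z \<in> space P \<Longrightarrow> 0 \<le> l z"
    and l_bdd: "bdd_above (l ` space P)"
    and C_def: "C = (SUP z\<in>space P. l z)"
    and n_pos: "n \<ge> 1" and K_pos: "K \<ge> 1"
    and Z_sets: "\<And>i. i < K \<Longrightarrow> Z i \<in> sets P"
    and Z_disj: "\<And>i j. i < K \<Longrightarrow> j < K \<Longrightarrow> i \<noteq> j \<Longrightarrow> Z i \<inter> Z j = {}"
    and Z_cover: "(\<Union>i<K. Z i) = space P"
    and \<gamma>: "\<gamma> \<ge> 1" and \<delta>: "\<delta> > 0"
    and \<alpha>: "0 \<le> \<alpha>" "\<alpha> \<le> \<gamma> * real n * (real K + \<gamma> * real n) / (real K * (4 * real n - 3))"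
    and Tr_range: "\<And>s. s \<in> space (PiM {..<n} (\<lambda>_. P)) \<Longrightarrow>
        set_mset (Tr s) \<subseteq> (\<Union>i\<in>hit_cells K Z (sample_set n s). Z i)"
    and proportions: "\<And>s i. s \<in> space (PiM {..<n} (\<lambda>_. P)) \<Longrightarrow> i \<in> hit_cells K Z (sample_set n s) \<Longrightarrow>
        real (size (cell (Z i) (sample_set n s))) / real n
        = real (size (cell (Z i) (Tr s)))
          / (\<Sum>j\<in>hit_cells K Z (sample_set n s). real (size (cell (Z j) (Tr s))))"
  shows "\<exists>E \<in> sets (PiM {..<n} (\<lambda>_. P)).
     measure (PiM {..<n} (\<lambda>_. P)) E \<ge> 1 - \<gamma> powr (-\<alpha>) - \<delta> \<and>
     (\<forall>s\<in>E. (\<integral>z. l z \<partial>P)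
        \<le> eps_bar K Z l (sample_set n s) (Tr s) + emp_risk l (Tr s)
          + C * sqrt (u_hat K Z \<gamma> \<delta> n (sample_set n s) * \<alpha> * ln \<gamma>)
          + g_fun C K n (card (hit_cells K Z (sample_set n s))) (\<delta> / 2))"
proof (cases "\<delta> < 1")
  case False
  have "\<gamma> powr (-\<alpha>) > 0" using \<gamma> by simp
  then have "1 - \<gamma> powr (-\<alpha>) - \<delta> \<le> 0" using False by linarith
  then show ?thesis by (intro bexI[of _ "{}"]) auto
next
  case True
  let ?M = "PiM {..<n} (\<lambda>_. P)"
  interpret M: prob_space ?M by (intro prob_space_PiM P)
  have nz: "space P \<noteq> {}" using prob_space.not_empty[OF P] .
  have lC: "l z \<le> C" if "z \<in> space P" for z
    unfolding C_def using l_bdd that by (rule cSUP_upper2) simp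
  have C0: "C \<ge> 0" using nz lC l_nonneg by (meson all_not_in_conv order.trans)
  have n0: "(0::nat) \<in> {..<n}" using n_pos by simp
  define t where "t = C * sqrt (ln (1 / \<delta>) / (2 * real n))"
  have sP: "x i \<in> space P" if "x \<in> space ?M" "i \<in> {..<n}" for x i
    using that by (auto simp: space_PiM)
  obtain E where E: "E \<in> sets ?M" "measure ?M E \<ge> 1 - \<delta>"
    "\<And>s. s \<in> E \<Longrightarrow> s \<in> space ?M \<and> (\<integral>z. l z \<partial>P) \<le> (\<Sum>i\<in>{..<n}. l (s i)) / real n + t"
  proof (cases "C = 0")
    case True
    have l0: "l z = 0" if "z \<in> space P" for z using lC[OF that] l_nonneg[OF that] True by simp
    have "(\<integral>z. l z \<partial>P) = (\<integral>z. 0 \<partial>P)" by (rule Bochner_Integration.integral_cong) (auto simp: l0)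
    then have i0: "(\<integral>z. l z \<partial>P) = 0" by simp
    have "(\<Sum>i\<in>{..<n}. l (s i)) / real n + t \<ge> 0" if "s \<in> space ?M" for s
      using sP[OF that] l_nonneg True unfolding t_def by (auto intro!: sum_nonneg divide_nonneg_nonneg)
    then show ?thesis using i0 \<delta> M.prob_space by (intro that[of "space ?M"]) auto
  next
    case False
    then have Cp: "C > 0" using C0 by simp
    define B where "B = {x\<in>space ?M. (\<Sum>i\<in>{..<n}. l (x i)) / real n \<le> (\<integral>z. l z \<partial>P) - t}"
    have tnn: "t \<ge> 0" unfolding t_def using C0 True \<delta> by (auto intro!: mult_nonneg_nonneg)
    have hb: "measure ?M B \<le> exp (-2 * real n * t\<^sup>2 / C\<^sup>2)"
      unfolding B_def
      by (rule hoeffding_part[OF P n_pos l_meas _ Cp tnn]) (use l_nonneg lC in auto)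
    have lnp: "ln (1 / \<delta>) \<ge> 0" using True \<delta> by simp
    have "-2 * real n * t\<^sup>2 / C\<^sup>2 = - ln (1 / \<delta>)"
      unfolding t_def using Cp n_pos lnp by (simp add: power_mult_distrib field_simps)
    also have "\<dots> = ln \<delta>" using \<delta> by (simp add: ln_div)
    finally have "measure ?M B \<le> \<delta>" using hb \<delta> by simp
    have Bm: "B \<in> sets ?M"
    proof -
      have [measurable]: "(\<lambda>x. l (x i)) \<in> borel_measurable ?M" if "i \<in> {..<n}" for i
        using measurable_compose[OF measurable_component_singleton[of i "{..<n}" "\<lambda>_. P"] l_meas] that
        by simp
      show ?thesis unfolding B_def by measurable
    qed
    have "measure ?M (space ?M - B) = 1 - measure ?M B" using Bm by (rule M.prob_compl)
    then have m: "measure ?M (space ?M - B) \<ge> 1 - \<delta>" using \<open>measure ?M B \<le> \<delta>\<close> by simp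
    show ?thesis
      by (rule that[of "space ?M - B"]) (use Bm m in \<open>auto simp: B_def\<close>)
  qed
  show ?thesis
  proof (intro bexI[of _ E] conjI ballI)
    show "E \<in> sets ?M" by (rule E(1))
    have "\<gamma> powr (-\<alpha>) \<ge> 0" by simp
    then show "measure ?M E \<ge> 1 - \<gamma> powr (-\<alpha>) - \<delta>" using E(2) by linarith
  next
    fix s assume sE: "s \<in> E"
    have sM: "s \<in> space ?M" and bnd: "(\<integral>z. l z \<partial>P) \<le> (\<Sum>i\<in>{..<n}. l (s i)) / real n + t"
      using E(3)[OF sE] by auto
    let ?S = "sample_set n s"
    have emp: "emp_risk l ?S = (\<Sum>i\<in>{..<n}. l (s i)) / real n"
      unfolding emp_risk_def by (simp add: emp_sample)
    have Scov: "set_mset ?S \<subseteq> (\<Union>i<K. Z i)"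
      using sP[OF sM] Z_cover by (auto simp: set_sample)
    have det: "emp_risk l ?S \<le> eps_bar K Z l ?S (Tr s) + emp_risk l (Tr s)"
      by (rule det_bound[OF Z_disj Scov Tr_range[OF sM]]) (use proportions[OF sM] in auto)
    have lnK: "ln (2 * real K / \<delta>) \<ge> 0" using K_pos \<delta> True by (simp add: ln_ge_zero_iff field_simps)
    have u0: "u_hat K Z \<gamma> \<delta> n ?S \<ge> 0"
      unfolding u_hat_def using \<gamma> lnK n_pos
      by (intro add_nonneg_nonneg mult_nonneg_nonneg sum_nonneg divide_nonneg_nonneg) auto
    have sq0: "C * sqrt (u_hat K Z \<gamma> \<delta> n ?S * \<alpha> * ln \<gamma>) \<ge> 0"
      using u0 \<alpha>(1) \<gamma> C0 by (intro mult_nonneg_nonneg) auto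
    define cT where "cT = card (hit_cells K Z ?S)"
    have cT1: "cT \<ge> 1"
    proof -
      have "s 0 \<in> space P" using sP[OF sM n0] .
      then obtain i where i: "i < K" "s 0 \<in> Z i" using Z_cover by auto
      have "s 0 \<in># ?S" using n0 by (auto simp: set_sample)
      then have "s 0 \<in># cell (Z i) ?S" using i by (simp add: cell_def)
      then have "i \<in> hit_cells K Z ?S" using i unfolding hit_cells_def by auto
      moreover have "finite (hit_cells K Z ?S)" unfolding hit_cells_def by auto
      ultimately show ?thesis unfolding cT_def
        by (metis One_nat_def Suc_leI card_gt_0_iff empty_iff)
    qed
    define L where "L = ln (2 * real K / (\<delta> / 2))"
    have L1: "ln (1 / \<delta>) \<le> L" unfolding L_def using \<delta> K_pos
      by (subst ln_le_cancel_iff) (auto simp: field_simps)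
    have "ln (1 / \<delta>) \<ge> 0" using True \<delta> by simp
    then have L0: "L \<ge> 0" using L1 by linarith
    have "ln (1 / \<delta>) / (2 * real n) \<le> real cT * L / real n"
    proof -
      have "ln (1 / \<delta>) / (2 * real n) \<le> L / real n" using L1 L0 n_pos by (simp add: field_simps)
      also have "\<dots> \<le> real cT * L / real n" using cT1 L0 n_pos
        by (intro divide_right_mono) (auto simp: mult_le_cancel_right1)
      finally show ?thesis .
    qed
    then have "sqrt (ln (1 / \<delta>) / (2 * real n)) \<le> sqrt (real cT * L / real n)" by simp
    then have "t \<le> C * sqrt (real cT * L / real n)" unfolding t_def using C0 by (rule mult_left_mono)
    also have "\<dots> \<le> C * (sqrt 2 + 1) * sqrt (real cT * L / real n)"
    proof -
      have q0: "sqrt (real cT * L / real n) \<ge> 0" using L0 by simp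
      have "sqrt (real cT * L / real n) \<le> (sqrt 2 + 1) * sqrt (real cT * L / real n)"
        using q0 by (simp add: algebra_simps)
      then show ?thesis using C0 by (simp add: mult.assoc mult_left_mono)
    qed
    also have "\<dots> \<le> g_fun C K n cT (\<delta> / 2)"
      unfolding g_fun_def L_def[symmetric] using C0 L0 by simp
    finally have tg: "t \<le> g_fun C K n cT (\<delta> / 2)" .
    show "(\<integral>z. l z \<partial>P)
        \<le> eps_bar K Z l ?S (Tr s) + emp_risk l (Tr s)
          + C * sqrt (u_hat K Z \<gamma> \<delta> n ?S * \<alpha> * ln \<gamma>)
          + g_fun C K n (card (hit_cells K Z ?S)) (\<delta> / 2)"
      using bnd emp det sq0 tg unfolding cT_def by linarith
  qed
qed

end
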